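(* For every integer $p\ge 3$ there exist $q\ge1$, a rational polytope $P\subseteq\mathbb{R}^{p+q}$ with $P_I\neq\emptyset$ and a rational objective function $cx+hy$ such that, with $\gamma^*=\max\{cx+hy:(x,y)\in P_I\}$, $$\sup\{cx+hy:(x,y)\in P^{(n)}_{2^{p-1}+1}\}>\gamma^*\quad\text{for all } n\in\mathbb{N}.$$ That is, in general $(2^{p-1}+1)$-disjunctive cuts do not suffice to solve a mixed integer program in finitely many rounds.
   Context: $P_I=\mathrm{conv}\{(x,y)\in P:x\in\mathbb{Z}^p\}$. A $k$-disjunction ($k\ge 2$) is a family of inequalities $d^1x\le\delta^1,\dots,d^kx\le\delta^k$ with $d^i\in\mathbb{Z}^p$ (not necessarily distinct), $\delta^i\in\mathbb{Z}$, such that every $x\in\mathbb{Z}^p$ satisfies $d^ix\le\delta^i$ for some $i$. For a closed convex set $C\subseteq\mathbb{R}^{p+q}$, an inequality $\alpha x+\beta y\le\gamma$ is a $k$-disjunctive cut for $C$ if it is not valid for $C$ and there is a $k$-disjunction such that every $(x,y)\in C$ with $\alpha x+\beta y>\gamma$ satisfies $d^ix>\delta^i$ for all $i$. The $k$-disjunctive closure of $C$ is the intersection of $C$ with all half-spaces given by $k$-disjunctive cuts for $C$; $P^{(0)}_k=P$ and $P^{(n)}_k$ is the $k$-disjunctive closure of $P^{(n-1)}_k$. *)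

theory Defs
  imports Complex_Main
begin

text \<open>Points of R^(p+q) are pairs (x,y) of functions nat => real; only the
coordinates x 0..x (p-1) and y 0..y (q-1) are meaningful, and points of the
ambient space have all other coordinates equal to 0.\<close>

type_synonym pt = "(nat \<Rightarrow> real) \<times> (nat \<Rightarrow> real)"

definition space :: "nat \<Rightarrow> nat \<Rightarrow> pt set" where
  "space p q = {(x, y). (\<forall>i\<ge>p. x i = 0) \<and> (\<forall>j\<ge>q. y j = 0)}"

definition lin :: "nat \<Rightarrow> (nat \<Rightarrow> real) \<Rightarrow> (nat \<Rightarrow> real) \<Rightarrow> real" where
  "lin n a x = (\<Sum>i<n. a i * x i)"

definition conv :: "pt set \<Rightarrow> pt set" where
  "conv S = {z. \<exists>(m::nat) (w::nat \<Rightarrow> real) (v::nat \<Rightarrow> pt).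
      (\<forall>i<m. w i \<ge> 0 \<and> v i \<in> S) \<and> (\<Sum>i<m. w i) = 1 \<and>
      z = ((\<lambda>j. \<Sum>i<m. w i * fst (v i) j), (\<lambda>j. \<Sum>i<m. w i * snd (v i) j))}"

definition rational_polytope :: "nat \<Rightarrow> nat \<Rightarrow> pt set \<Rightarrow> bool" where
  "rational_polytope p q P \<longleftrightarrow>
     (\<exists>(A :: ((nat \<Rightarrow> real) \<times> (nat \<Rightarrow> real) \<times> real) list).
        (\<forall>(ax, ay, b) \<in> set A. (\<forall>i<p. ax i \<in> \<rat>) \<and> (\<forall>j<q. ay j \<in> \<rat>) \<and> b \<in> \<rat>) \<and>
        P = {(x, y) \<in> space p q. \<forall>(ax, ay, b) \<in> set A. lin p ax x + lin q ay y \<le> b})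
     \<and> (\<exists>M. \<forall>(x, y) \<in> P. (\<forall>i<p. \<bar>x i\<bar> \<le> M) \<and> (\<forall>j<q. \<bar>y j\<bar> \<le> M))"

definition int_hull :: "nat \<Rightarrow> pt set \<Rightarrow> pt set" where
  "int_hull p P = conv {(x, y) \<in> P. \<forall>i<p. x i \<in> \<int>}"

definition k_disjunction :: "nat \<Rightarrow> nat \<Rightarrow> (nat \<Rightarrow> nat \<Rightarrow> int) \<Rightarrow> (nat \<Rightarrow> int) \<Rightarrow> bool" where
  "k_disjunction p k d \<delta> \<longleftrightarrow>
     (\<forall>x :: nat \<Rightarrow> int. \<exists>i<k. (\<Sum>j<p. d i j * x j) \<le> \<delta> i)"

definition k_disj_cut :: "nat \<Rightarrow> nat \<Rightarrow> nat \<Rightarrow> pt set \<Rightarrow>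
    (nat \<Rightarrow> real) \<Rightarrow> (nat \<Rightarrow> real) \<Rightarrow> real \<Rightarrow> bool" where
  "k_disj_cut p q k C \<alpha> \<beta> \<gamma> \<longleftrightarrow>
     (\<exists>(x, y) \<in> C. lin p \<alpha> x + lin q \<beta> y > \<gamma>) \<and>
     (\<exists>d \<delta>. k_disjunction p k d \<delta> \<and>
        (\<forall>(x, y) \<in> C. lin p \<alpha> x + lin q \<beta> y > \<gamma> \<longrightarrow>
           (\<forall>i<k. (\<Sum>j<p. real_of_int (d i j) * x j) > real_of_int (\<delta> i))))"

definition k_disj_closure :: "nat \<Rightarrow> nat \<Rightarrow> nat \<Rightarrow> pt set \<Rightarrow> pt set" where
  "k_disj_closure p q k C =
     C \<inter> (\<Inter>{{(x, y). lin p \<alpha> x + lin q \<beta> y \<le> \<gamma>} | \<alpha> \<beta> \<gamma>. k_disj_cut p q k C \<alpha> \<beta> \<gamma>})"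

definition k_disj_iter :: "nat \<Rightarrow> nat \<Rightarrow> nat \<Rightarrow> nat \<Rightarrow> pt set \<Rightarrow> pt set" where
  "k_disj_iter p q k n P = (k_disj_closure p q k ^^ n) P"

end

theory Submission imports Defs begin

definition inP :: "nat \<Rightarrow> real \<Rightarrow> (nat \<Rightarrow> real) \<Rightarrow> real \<Rightarrow> bool" where
  "inP p t x y \<longleftrightarrow> 0 \<le> y \<and> \<bar>x (p-1) - 1\<bar> \<le> 1 - y/t \<and>
     (\<Sum>i<p-1. \<bar>x i - x (p-1)/2\<bar>) \<le> (1 - y/t) * ((real p - 1)/2) + (real p - 3) * (x (p-1) - 1)/2"

definition Pt :: "nat \<Rightarrow> real \<Rightarrow> pt set" where
  "Pt p t = {z. z \<in> space p 1 \<and> inP p t (fst z) (snd z 0)}"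

definition yv :: "real \<Rightarrow> nat \<Rightarrow> real" where
  "yv s = (\<lambda>j. if j = 0 then s else 0)"

definition xb :: "nat \<Rightarrow> nat \<Rightarrow> real" where
  "xb p = (\<lambda>j. if j < p-1 then 1/2 else if j = p-1 then 1 else 0)"

lemma lin1: "lin (Suc 0) \<beta> y = \<beta> 0 * y 0"
  by (simp add: lin_def)

lemma lin_yv: "lin (Suc 0) \<beta> (yv s) = \<beta> 0 * s"
  by (simp add: lin_def yv_def)

lemma lin_split: "p \<ge> 1 \<Longrightarrow> lin p a x = (\<Sum>i<p-1. a i * x i) + a (p-1) * x (p-1)"
proof -
  assume "p \<ge> 1"
  then obtain n where "p = Suc n" by (cases p) auto
  then show ?thesis by (simp add: lin_def)
qed

lemma lin_comb: "lin p a (\<lambda>j. u * x j + v * x' j) = u * lin p a x + v * lin p a x'"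
  unfolding lin_def by (simp add: sum.distrib sum_distrib_left algebra_simps)

lemma lin_cong: "(\<And>j. j < p \<Longrightarrow> x j = x' j) \<Longrightarrow> lin p a x = lin p a x'"
  unfolding lin_def by (rule sum.cong) auto

lemma inP_zero: "inP p t x 0 = inP p 1 x 0"
  by (simp add: inP_def)

lemma space_yv: "(x, yv s) \<in> space p (Suc 0) \<longleftrightarrow> (\<forall>i\<ge>p. x i = 0)"
  by (simp add: space_def yv_def)

lemma factC:
  assumes p3: "p \<ge> 3"
    and hv: "\<And>v::nat\<Rightarrow>real. (\<forall>j\<ge>p. v j = 0) \<Longrightarrow> inP p 1 v 0 \<Longrightarrow> (\<forall>j<p. v j \<in> \<int>) \<Longrightarrow> lin p \<alpha> v \<le> \<gamma>"
    and hx: "inP p 1 x 0"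
  shows "lin p \<alpha> x \<le> \<gamma>"
proof -
  define A where "A = Max ((\<lambda>i. \<bar>\<alpha> i\<bar>) ` {..<p-1})"
  have "0 \<in> {..<p-1}" using p3 by auto
  then have ne: "{..<p-1} \<noteq> {}" by blast
  have "A \<in> (\<lambda>i. \<bar>\<alpha> i\<bar>) ` {..<p-1}" unfolding A_def using ne by (intro Max_in) auto
  then obtain i where i: "i < p-1" "\<bar>\<alpha> i\<bar> = A" by auto
  have Age: "\<And>j. j < p-1 \<Longrightarrow> \<bar>\<alpha> j\<bar> \<le> A" unfolding A_def by (intro Max_ge) auto
  define sg :: real where "sg = (if \<alpha> i \<ge> 0 then 1 else -1)"
  have sga: "sg * \<alpha> i = A" using i by (auto simp: sg_def)
  have sgi: "sg \<in> \<int>" by (simp add: sg_def)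
  define v0 where "v0 = (\<lambda>j. if j = i then sg else (0::real))"
  define v2 where "v2 = (\<lambda>j. if j < p-1 then 1 + (if j = i then sg * (real p - 2) else 0)
                          else if j = p-1 then 2 else (0::real))"
  have ip: "i \<noteq> p - 1" using i by auto
  have lv0: "lin p \<alpha> v0 = A"
  proof -
    have "lin p \<alpha> v0 = (\<Sum>j<p-1. \<alpha> j * v0 j) + \<alpha> (p-1) * v0 (p-1)"
      using p3 by (simp add: lin_split)
    also have "(\<Sum>j<p-1. \<alpha> j * v0 j) = (\<Sum>j<p-1. if j = i then \<alpha> i * sg else 0)"
      by (intro sum.cong) (auto simp: v0_def)
    also have "\<dots> = \<alpha> i * sg" using i by simp
    also have "v0 (p-1) = 0" using ip by (simp add: v0_def)
    finally show ?thesis using sga by (simp add: mult.commute)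
  qed
  have lv2: "lin p \<alpha> v2 = (\<Sum>j<p-1. \<alpha> j) + (real p - 2) * A + 2 * \<alpha> (p-1)"
  proof -
    have "lin p \<alpha> v2 = (\<Sum>j<p-1. \<alpha> j + (if j = i then \<alpha> j * sg * (real p - 2) else 0)) + \<alpha> (p-1) * 2"
      using p3 by (subst lin_split) (auto simp: v2_def algebra_simps intro!: sum.cong)
    also have "\<dots> = (\<Sum>j<p-1. \<alpha> j) + \<alpha> i * sg * (real p - 2) + \<alpha> (p-1) * 2"
      using i by (simp add: sum.distrib)
    finally show ?thesis using sga by (simp add: algebra_simps)
  qed
  have c0: "inP p 1 v0 0"
  proof -
    have "(\<Sum>j<p-1. \<bar>v0 j - v0 (p-1)/2\<bar>) = (\<Sum>j<p-1. if j = i then 1 else 0)"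
      using ip by (intro sum.cong) (auto simp: v0_def sg_def)
    also have "\<dots> = 1" using i by simp
    finally have S: "(\<Sum>j<p-1. \<bar>v0 j - v0 (p-1)/2\<bar>) = 1" .
    have v: "v0 (p-1) = 0" using ip by (simp add: v0_def)
    have e: "(1 - 0/1) * ((real p - 1)/2) + (real p - 3) * (v0 (p-1) - 1)/2 = 1"
      unfolding v by (simp add: field_simps)
    show ?thesis unfolding inP_def e S using v by simp
  qed
  have c2: "inP p 1 v2 0"
  proof -
    have "(\<Sum>j<p-1. \<bar>v2 j - v2 (p-1)/2\<bar>) = (\<Sum>j<p-1. if j = i then real p - 2 else 0)"
      using p3 by (intro sum.cong) (auto simp: v2_def sg_def)
    also have "\<dots> = real p - 2" using i by simp
    finally have S: "(\<Sum>j<p-1. \<bar>v2 j - v2 (p-1)/2\<bar>) = real p - 2" .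
    have v: "v2 (p-1) = 2" by (simp add: v2_def)
    have e: "(1 - 0/1) * ((real p - 1)/2) + (real p - 3) * (v2 (p-1) - 1)/2 = real p - 2"
      unfolding v by (simp add: field_simps)
    show ?thesis unfolding inP_def e S using v by simp
  qed
  have h0: "lin p \<alpha> v0 \<le> \<gamma>"
    using ip sgi i by (intro hv c0) (auto simp: v0_def)
  have h2: "lin p \<alpha> v2 \<le> \<gamma>"
    using p3 sgi by (intro hv c2) (auto simp: v2_def)
  define z where "z = x (p-1)"
  have z02: "0 \<le> z" "z \<le> 2" using hx by (auto simp: inP_def z_def)
  have W: "(\<Sum>j<p-1. \<bar>x j - z/2\<bar>) \<le> 1 + (real p - 3) * z / 2"
  proof -
    have W0: "(\<Sum>j<p-1. \<bar>x j - z/2\<bar>) \<le> (1 - 0/1) * ((real p - 1)/2) + (real p - 3) * (z - 1)/2"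
      using hx unfolding inP_def z_def by blast
    have e: "(1 - 0/1) * ((real p - 1)/2) + (real p - 3) * (z - 1)/2 = 1 + (real p - 3) * z / 2"
      by (simp add: field_simps)
    show ?thesis using W0 unfolding e .
  qed
  have "(\<Sum>j<p-1. \<alpha> j * x j) = (\<Sum>j<p-1. \<alpha> j) * (z/2) + (\<Sum>j<p-1. \<alpha> j * (x j - z/2))"
  proof -
    have "(\<Sum>j<p-1. \<alpha> j * (x j - z/2)) = (\<Sum>j<p-1. \<alpha> j * x j) - (\<Sum>j<p-1. \<alpha> j) * (z/2)"
      by (simp add: right_diff_distrib sum_subtractf sum_distrib_right)
    then show ?thesis by linarith
  qed
  also have "(\<Sum>j<p-1. \<alpha> j * (x j - z/2)) \<le> (\<Sum>j<p-1. A * \<bar>x j - z/2\<bar>)"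
  proof (rule sum_mono)
    fix j assume "j \<in> {..<p-1}"
    then have "\<bar>\<alpha> j\<bar> \<le> A" using Age by auto
    then have "\<bar>\<alpha> j\<bar> * \<bar>x j - z/2\<bar> \<le> A * \<bar>x j - z/2\<bar>" by (simp add: mult_right_mono)
    moreover have "\<alpha> j * (x j - z/2) \<le> \<bar>\<alpha> j\<bar> * \<bar>x j - z/2\<bar>"
      by (metis abs_ge_self abs_mult)
    ultimately show "\<alpha> j * (x j - z/2) \<le> A * \<bar>x j - z/2\<bar>" by linarith
  qed
  also have "(\<Sum>j<p-1. A * \<bar>x j - z/2\<bar>) \<le> A * (1 + (real p - 3) * z / 2)"
    unfolding sum_distrib_left[symmetric] using W i(2)[symmetric]
    by (intro mult_left_mono) auto
  finally have L: "lin p \<alpha> x \<le> (\<Sum>j<p-1. \<alpha> j) * (z/2) + A * (1 + (real p - 3) * z / 2) + \<alpha> (p-1) * z"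
    using p3 by (subst lin_split) (auto simp: z_def)
  have "(\<Sum>j<p-1. \<alpha> j) * (z/2) + A * (1 + (real p - 3) * z / 2) + \<alpha> (p-1) * z
      = (1 - z/2) * lin p \<alpha> v0 + (z/2) * lin p \<alpha> v2"
    unfolding lv0 lv2 by (simp add: field_simps)
  also have "\<dots> \<le> (1 - z/2) * \<gamma> + (z/2) * \<gamma>"
    using z02 h0 h2 by (intro add_mono mult_left_mono) auto
  also have "\<dots> = \<gamma>" by (simp add: algebra_simps)
  finally show ?thesis using L by linarith
qed

definition sp :: "nat \<Rightarrow> nat set + bool \<Rightarrow> nat \<Rightarrow> int" where
  "sp p a = (case a of Inl S \<Rightarrow> (\<lambda>j. if j < p-1 then (if j \<in> S then 1 else 0) else if j = p-1 then 1 else 0)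
     | Inr b \<Rightarrow> (if b then (\<lambda>j. if j < p-1 then 1 else if j = p-1 then 2 else 0) else (\<lambda>j. 0)))"

definition JJ :: "nat \<Rightarrow> (nat set + bool) set" where
  "JJ p = Inl ` Pow {..<p-1} \<union> Inr ` UNIV"

lemma card_JJ: "card (JJ p) = 2^(p-1) + 2"
proof -
  have "card (Inl ` Pow {..<p-1} :: (nat set + bool) set) = 2^(p-1)"
    by (subst card_image) (auto simp: card_Pow)
  moreover have "card (Inr ` (UNIV::bool set) :: (nat set + bool) set) = 2"
    by (subst card_image) auto
  ultimately show ?thesis unfolding JJ_def
    by (subst card_Un_disjoint) auto
qed

lemma finite_JJ: "finite (JJ p)"
  unfolding JJ_def by auto

definition mp :: "nat \<Rightarrow> nat set + bool \<Rightarrow> nat set + bool \<Rightarrow> nat \<Rightarrow> real" where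
  "mp p a b = (\<lambda>j. (of_int (sp p a j) + of_int (sp p b j)) / 2)"

lemma mp_sym: "mp p a b = mp p b a"
  by (auto simp: mp_def)

definition zW :: "nat \<Rightarrow> (nat \<Rightarrow> real) \<Rightarrow> bool" where
  "zW p x \<longleftrightarrow> (x (p-1) = 1 \<and> (\<Sum>i<p-1. \<bar>x i - x (p-1)/2\<bar>) \<le> (real p - 2)/2) \<or>
     ((x (p-1) = 1/2 \<or> x (p-1) = 3/2) \<and> (\<Sum>i<p-1. \<bar>x i - x (p-1)/2\<bar>) = (real p - 1)/4)"

lemma zW_ord:
  assumes p3: "p \<ge> 3" and a: "a \<in> JJ p" and b: "b \<in> JJ p" and ab: "a \<noteq> b"
    and ord: "(\<exists>S. a = Inl S) \<and> (b = Inr False \<or> b = Inr True \<or> (\<exists>T. b = Inl T)) \<or> (a = Inr False \<and> b = Inr True)"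
  shows "zW p (mp p a b)"
proof -
  have rp: "real (p - 1) = real p - 1" using p3 by auto
  consider (ST) S T where "a = Inl S" "b = Inl T" | (Sf) S where "a = Inl S" "b = Inr False"
    | (St) S where "a = Inl S" "b = Inr True" | (ft) "a = Inr False" "b = Inr True"
    using ord by auto
  then show ?thesis
  proof cases
    case ST
    have ST': "S \<subseteq> {..<p-1}" "T \<subseteq> {..<p-1}" "S \<noteq> T" using a b ab ST by (auto simp: JJ_def)
    then obtain i0 where i0: "i0 < p-1" "(i0 \<in> S) \<noteq> (i0 \<in> T)" by blast
    define g where "g = (\<lambda>i. \<bar>mp p a b i - mp p a b (p-1)/2\<bar>)"
    have z: "mp p a b (p-1) = 1" using ST by (simp add: mp_def sp_def)
    have g: "\<And>i. i < p-1 \<Longrightarrow> g i = (if (i \<in> S) = (i \<in> T) then 1/2 else 0)"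
      using ST z by (auto simp: g_def mp_def sp_def)
    have "(\<Sum>i<p-1. g i) = g i0 + (\<Sum>i\<in>{..<p-1}-{i0}. g i)"
      using i0 by (subst sum.remove[of _ i0]) auto
    also have "\<dots> \<le> 0 + (\<Sum>i\<in>{..<p-1}-{i0}. 1/2)"
      using i0 g by (intro add_mono sum_mono) auto
    also have "\<dots> = (real p - 2)/2" using i0 p3 by (simp add: of_nat_diff)
    finally show ?thesis using z by (simp add: zW_def g_def)
  next
    case Sf
    have z: "mp p a b (p-1) = 1/2" using Sf by (simp add: mp_def sp_def)
    have "(\<Sum>i<p-1. \<bar>mp p a b i - mp p a b (p-1)/2\<bar>) = (\<Sum>i<p-1. 1/4)"
      using Sf z by (intro sum.cong) (auto simp: mp_def sp_def)
    then show ?thesis using z rp by (simp add: zW_def)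
  next
    case St
    have z: "mp p a b (p-1) = 3/2" using St by (simp add: mp_def sp_def)
    have "(\<Sum>i<p-1. \<bar>mp p a b i - mp p a b (p-1)/2\<bar>) = (\<Sum>i<p-1. 1/4)"
      using St z by (intro sum.cong) (auto simp: mp_def sp_def)
    then show ?thesis using z rp by (simp add: zW_def)
  next
    case ft
    have z: "mp p a b (p-1) = 1" using ft by (simp add: mp_def sp_def)
    have "(\<Sum>i<p-1. \<bar>mp p a b i - mp p a b (p-1)/2\<bar>) = (\<Sum>i<p-1. 0)"
      using ft z by (intro sum.cong) (auto simp: mp_def sp_def)
    then show ?thesis using z p3 by (simp add: zW_def)
  qed
qed

lemma zW_pair:
  assumes p3: "p \<ge> 3" and a: "a \<in> JJ p" and b: "b \<in> JJ p" and ab: "a \<noteq> b"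
  shows "zW p (mp p a b)"
proof -
  have cases: "(\<exists>S. a = Inl S) \<or> a = Inr False \<or> a = Inr True"
    by (metis (full_types) sumE)
  have cb: "(\<exists>S. b = Inl S) \<or> b = Inr False \<or> b = Inr True"
    by (metis (full_types) sumE)
  show ?thesis
  proof (cases "(\<exists>S. a = Inl S) \<and> (b = Inr False \<or> b = Inr True \<or> (\<exists>T. b = Inl T)) \<or> (a = Inr False \<and> b = Inr True)")
    case True then show ?thesis using zW_ord[OF p3 a b ab] by blast
  next
    case False
    then have "(\<exists>S. b = Inl S) \<and> (a = Inr False \<or> a = Inr True \<or> (\<exists>T. a = Inl T)) \<or> (b = Inr False \<and> a = Inr True)"
      using cases cb ab by auto
    then show ?thesis using zW_ord[OF p3 b a] ab a b mp_sym by metis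
  qed
qed

lemma lin1': "lin 1 \<beta> y = \<beta> 0 * y 0"
  by (simp add: lin_def)

lemma zW_P2:
  assumes p3: "p \<ge> 3" and z: "zW p x" and t: "t > 0"
  shows "inP p t x (t / (real p - 1))"
proof -
  have p1: "real p - 1 > 0" using p3 by auto
  have r: "1 - (t / (real p - 1)) / t = (real p - 2) / (real p - 1)"
    using t p1 by (simp add: field_simps)
  have r2: "(real p - 2) / (real p - 1) * ((real p - 1) / 2) = (real p - 2)/2"
    using p1 by (simp add: field_simps)
  have h: "1/2 \<le> (real p - 2) / (real p - 1)"
    using p1 p3 by (simp add: field_simps)
  have h0: "0 \<le> (real p - 2) / (real p - 1)"
    using p1 p3 by simp
  have "\<bar>x (p-1) - 1\<bar> \<le> (real p - 2) / (real p - 1) \<and>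
     (\<Sum>i<p-1. \<bar>x i - x (p-1)/2\<bar>) \<le> (real p - 2)/2 + (real p - 3) * (x (p-1) - 1)/2"
    using z unfolding zW_def
  proof (elim disjE conjE)
    assume "x (p-1) = 1" "(\<Sum>i<p-1. \<bar>x i - x (p-1)/2\<bar>) \<le> (real p - 2)/2"
    then show ?thesis using h0 by simp
  next
    assume a: "x (p-1) = 1/2" "(\<Sum>i<p-1. \<bar>x i - x (p-1)/2\<bar>) = (real p - 1)/4"
    have "(real p - 1) / 4 \<le> (real p - 2) / 2 + (real p - 3) * (1 / 2 - 1) / 2"
      by (simp add: field_simps)
    then show ?thesis unfolding a(2) unfolding a(1) using h by simp
  next
    assume a: "x (p-1) = 3/2" "(\<Sum>i<p-1. \<bar>x i - x (p-1)/2\<bar>) = (real p - 1)/4"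
    have "(real p - 1) / 4 \<le> (real p - 2) / 2 + (real p - 3) * (3 / 2 - 1) / 2"
      using p3 by (simp add: field_simps)
    then show ?thesis unfolding a(2) unfolding a(1) using h by simp
  qed
  then show ?thesis using t p1 unfolding inP_def r r2 by auto
qed

lemma zW_P3:
  assumes p3: "p \<ge> 3" and z: "zW p x"
  shows "inP p 1 (\<lambda>j. 2 * xb p j - x j) 0"
proof -
  have c: "(\<Sum>i<p-1. \<bar>2 * xb p i - x i - (2 * xb p (p-1) - x (p-1))/2\<bar>) = (\<Sum>i<p-1. \<bar>x i - x (p-1)/2\<bar>)"
  proof (intro sum.cong refl)
    fix i assume "i \<in> {..<p-1}"
    then have "2 * xb p i - x i - (2 * xb p (p-1) - x (p-1))/2 = -(x i - x (p-1)/2)"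
      by (simp add: xb_def field_simps)
    then show "\<bar>2 * xb p i - x i - (2 * xb p (p-1) - x (p-1))/2\<bar> = \<bar>x i - x (p-1)/2\<bar>"
      by (simp only: abs_minus_cancel)
  qed
  have "xb p (p-1) = 1" by (simp add: xb_def)
  moreover have "\<bar>1 - x (p-1)\<bar> \<le> 1 \<and>
     (\<Sum>i<p-1. \<bar>x i - x (p-1)/2\<bar>) \<le> (real p - 1)/2 + (real p - 3) * (1 - x (p-1))/2"
    using z unfolding zW_def
  proof (elim disjE conjE)
    assume a: "x (p-1) = 1" "(\<Sum>i<p-1. \<bar>x i - x (p-1)/2\<bar>) \<le> (real p - 2)/2"
    then show ?thesis by simp
  next
    assume a: "x (p-1) = 1/2" "(\<Sum>i<p-1. \<bar>x i - x (p-1)/2\<bar>) = (real p - 1)/4"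
    have "(real p - 1) / 4 \<le> (real p - 1)/2 + (real p - 3) * (1 - 1/2) / 2"
      using p3 by (simp add: field_simps)
    then show ?thesis unfolding a(2) unfolding a(1) by simp
  next
    assume a: "x (p-1) = 3/2" "(\<Sum>i<p-1. \<bar>x i - x (p-1)/2\<bar>) = (real p - 1)/4"
    have "(real p - 1) / 4 \<le> (real p - 1)/2 + (real p - 3) * (1 - 3/2) / 2"
      using p3 by (simp add: field_simps)
    then show ?thesis unfolding a(2) unfolding a(1) by simp
  qed
  ultimately show ?thesis unfolding inP_def c by (simp add: abs_minus_commute)
qed

lemma Pt_mono:
  assumes "0 < s" "s \<le> t" "p \<ge> 3"
  shows "Pt p s \<subseteq> Pt p t"
proof
  fix w assume w: "w \<in> Pt p s"
  let ?y = "snd w 0"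
  have y0: "0 \<le> ?y" using w by (auto simp: Pt_def inP_def)
  have "?y / t \<le> ?y / s" using assms y0 by (intro divide_left_mono) auto
  then have "1 - ?y/s \<le> 1 - ?y/t" by linarith
  moreover then have "(1 - ?y/s) * ((real p - 1)/2) \<le> (1 - ?y/t) * ((real p - 1)/2)"
    using assms by (intro mult_right_mono) auto
  moreover have "w \<in> space p 1" "\<bar>fst w (p-1) - 1\<bar> \<le> 1 - ?y/s"
    "(\<Sum>i<p-1. \<bar>fst w i - fst w (p-1)/2\<bar>) \<le> (1 - ?y/s) * ((real p - 1)/2) + (real p - 3) * (fst w (p-1) - 1)/2"
    using w unfolding Pt_def inP_def by auto
  ultimately have "inP p t (fst w) ?y" using y0 unfolding inP_def by (intro conjI; linarith)
  then show "w \<in> Pt p t" using w by (simp add: Pt_def)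
qed

lemma closure_I:
  assumes "w \<in> C" "\<And>\<alpha> \<beta> \<gamma>. k_disj_cut p q k C \<alpha> \<beta> \<gamma> \<Longrightarrow> lin p \<alpha> (fst w) + lin q \<beta> (snd w) \<le> \<gamma>"
  shows "w \<in> k_disj_closure p q k C"
  using assms unfolding k_disj_closure_def by (cases w) auto

lemma closure_sub: "k_disj_closure p q k C \<subseteq> C"
  unfolding k_disj_closure_def by auto

lemma int_real_sum:
  assumes "\<forall>j<p. x j \<in> \<int>"
  shows "(\<Sum>j<p. real_of_int (d j) * x j) = real_of_int (\<Sum>j<p. d j * \<lfloor>x j\<rfloor>)"
proof -
  have "\<And>j. j < p \<Longrightarrow> x j = real_of_int \<lfloor>x j\<rfloor>"
    using assms by (metis Ints_cases floor_of_int)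
  then show ?thesis by (simp add: of_int_sum)
qed

lemma lin_yv': "lin 1 \<beta> (yv s) = \<beta> 0 * s"
  by (simp add: lin_def yv_def)

lemma sp_zero: "j \<ge> p \<Longrightarrow> p \<ge> 1 \<Longrightarrow> sp p a j = 0"
  by (cases a) (auto simp: sp_def)

lemma step:
  assumes p3: "p \<ge> 3" and t: "t > 0" and sub: "Pt p t \<subseteq> C"
  shows "Pt p (t / (2 * (real p - 1))) \<subseteq> k_disj_closure p 1 (2^(p-1)+1) C"
proof
  define s where "s = t / (2 * (real p - 1))"
  have p1: "real p - 1 > 0" using p3 by auto
  have s0: "0 < s" using t p1 by (simp add: s_def)
  have st: "s \<le> t" unfolding s_def using t p3 by (simp add: field_simps)
  have s2: "2 * s = t / (real p - 1)" unfolding s_def using p1 by (simp add: field_simps)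
  fix w assume w0: "w \<in> Pt p (t / (2 * (real p - 1)))"
  then have ws: "w \<in> Pt p s" by (simp add: s_def)
  have wC: "w \<in> C" using Pt_mono[OF s0 st p3] sub ws by blast
  show "w \<in> k_disj_closure p 1 (2^(p-1)+1) C"
  proof (rule closure_I[OF wC])
    fix \<alpha> \<beta> \<gamma> assume cut: "k_disj_cut p 1 (2^(p-1)+1) C \<alpha> \<beta> \<gamma>"
    then obtain d \<delta> where kd: "k_disjunction p (2^(p-1)+1) d \<delta>"
      and pr: "\<forall>(x, y) \<in> C. lin p \<alpha> x + lin 1 \<beta> y > \<gamma> \<longrightarrow>
           (\<forall>i<2^(p-1)+1. (\<Sum>j<p. real_of_int (d i j) * x j) > real_of_int (\<delta> i))"
      unfolding k_disj_cut_def by blast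
    have sat: "lin p \<alpha> x + lin 1 \<beta> y \<le> \<gamma>"
      if "(x, y) \<in> C" "i < 2^(p-1)+1" "(\<Sum>j<p. real_of_int (d i j) * x j) \<le> real_of_int (\<delta> i)" for x y i
    proof (rule ccontr)
      assume "\<not> lin p \<alpha> x + lin 1 \<beta> y \<le> \<gamma>"
      then have "lin p \<alpha> x + lin 1 \<beta> y > \<gamma>" by simp
      then have "\<forall>i<2^(p-1)+1. (\<Sum>j<p. real_of_int (d i j) * x j) > real_of_int (\<delta> i)"
        using pr that(1) by auto
      then have "(\<Sum>j<p. real_of_int (d i j) * x j) > real_of_int (\<delta> i)" using that(2) by blast
      then show False using that(3) by linarith
    qed
    have intpt: "lin p \<alpha> x + lin 1 \<beta> y \<le> \<gamma>" if "(x, y) \<in> C" "\<forall>j<p. x j \<in> \<int>" for x y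
    proof -
      have "\<exists>i<2^(p-1)+1. (\<Sum>j<p. d i j * \<lfloor>x j\<rfloor>) \<le> \<delta> i"
        using kd[unfolded k_disjunction_def, rule_format, of "\<lambda>j. \<lfloor>x j\<rfloor>"] .
      then obtain i where i: "i < 2^(p-1)+1" "(\<Sum>j<p. d i j * \<lfloor>x j\<rfloor>) \<le> \<delta> i"
        by blast
      have "(\<Sum>j<p. real_of_int (d i j) * x j) \<le> real_of_int (\<delta> i)"
        unfolding int_real_sum[OF that(2)] using i(2) by linarith
      then show ?thesis using sat[OF that(1) i(1)] by blast
    qed
    have FC: "lin p \<alpha> x \<le> \<gamma>" if "inP p 1 x 0" for x
    proof (rule factC[OF p3 _ that])
      fix v :: "nat \<Rightarrow> real" assume v: "\<forall>j\<ge>p. v j = 0" "inP p 1 v 0" "\<forall>j<p. v j \<in> \<int>"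
      have sv: "(v, yv 0) \<in> space p 1" using v(1) space_yv by simp
      have "inP p t v (yv 0 0)" using v(2) by (simp add: yv_def inP_zero[of p t])
      then have "(v, yv 0) \<in> Pt p t" using sv by (simp add: Pt_def)
      then have "(v, yv 0) \<in> C" using sub by blast
      from intpt[OF this v(3)] show "lin p \<alpha> v \<le> \<gamma>" by (simp add: lin_yv lin_yv')
    qed
    define f where "f a = (SOME i. i < 2^(p-1)+1 \<and> (\<Sum>j<p. d i j * sp p a j) \<le> \<delta> i)" for a
    have f: "f a < 2^(p-1)+1 \<and> (\<Sum>j<p. d (f a) j * sp p a j) \<le> \<delta> (f a)" for a
      unfolding f_def by (rule someI_ex) (use kd[unfolded k_disjunction_def, rule_format, of "sp p a"] in blast)
    have "\<not> inj_on f (JJ p)"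
    proof
      assume "inj_on f (JJ p)"
      then have "card (JJ p) \<le> card {..<2^(p-1)+1::nat}"
        by (rule card_inj_on_le) (use f in auto)
      then show False by (simp add: card_JJ)
    qed
    then obtain a b where ab: "a \<in> JJ p" "b \<in> JJ p" "a \<noteq> b" "f a = f b"
      unfolding inj_on_def by blast
    define i0 where "i0 = f a"
    define m where "m = mp p a b"
    have hm: "(\<Sum>j<p. real_of_int (d i0 j) * m j) \<le> real_of_int (\<delta> i0)"
    proof -
      have "(\<Sum>j<p. real_of_int (d i0 j) * m j)
          = (real_of_int (\<Sum>j<p. d i0 j * sp p a j) + real_of_int (\<Sum>j<p. d i0 j * sp p b j)) / 2"
      proof -
        have e: "real_of_int (d i0 j) * m j = (real_of_int (d i0 j * sp p a j) + real_of_int (d i0 j * sp p b j)) / 2" for j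
          by (simp add: m_def mp_def field_simps)
        show ?thesis unfolding e sum_divide_distrib[symmetric] sum.distrib of_int_sum ..
      qed
      also have "\<dots> \<le> (real_of_int (\<delta> i0) + real_of_int (\<delta> i0)) / 2"
      proof -
        have ha: "real_of_int (\<Sum>j<p. d i0 j * sp p a j) \<le> real_of_int (\<delta> i0)"
          using f[of a] unfolding i0_def of_int_le_iff by blast
        have hb: "real_of_int (\<Sum>j<p. d i0 j * sp p b j) \<le> real_of_int (\<delta> i0)"
          using f[of b] ab(4) unfolding i0_def of_int_le_iff by simp
        show ?thesis by (intro divide_right_mono add_mono ha hb) simp
      qed
      finally show ?thesis by simp
    qed
    have zw: "zW p m" using zW_pair[OF p3 ab(1-3)] m_def by simp
    have mspace: "\<forall>j\<ge>p. m j = 0" using p3 by (simp add: m_def mp_def sp_zero)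
    have "(m, yv (t / (real p - 1))) \<in> Pt p t"
    proof -
      have sm: "(m, yv (t / (real p - 1))) \<in> space p 1" using mspace space_yv by simp
      show ?thesis unfolding Pt_def using sm zW_P2[OF p3 zw t] by (simp add: yv_def)
    qed
    then have mC: "(m, yv (t / (real p - 1))) \<in> C" using sub by blast
    have V1: "lin p \<alpha> m + \<beta> 0 * (t / (real p - 1)) \<le> \<gamma>"
      using sat[OF mC _ hm] f[of a] unfolding i0_def by (simp add: lin_yv lin_yv')
    define c where "c = (\<lambda>j. 2 * xb p j - m j)"
    have V2: "lin p \<alpha> c \<le> \<gamma>" using FC zW_P3[OF p3 zw] unfolding c_def by blast
    have xbe: "xb p = (\<lambda>j. (1/2) * c j + (1/2) * m j)" by (rule ext) (simp add: c_def field_simps)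
    have A: "lin p \<alpha> (xb p) + \<beta> 0 * s \<le> \<gamma>"
    proof -
      have "lin p \<alpha> (xb p) = (1/2) * lin p \<alpha> c + (1/2) * lin p \<alpha> m"
        by (subst xbe) (rule lin_comb)
      moreover have "\<beta> 0 * s = (1/2) * (\<beta> 0 * (t / (real p - 1)))"
        unfolding s2[symmetric] by simp
      ultimately show ?thesis using V1 V2 by linarith
    qed
    obtain x y where wxy: "w = (x, y)" by (cases w)
    have inw: "inP p s x (y 0)" using ws wxy by (simp add: Pt_def)
    define \<rho> where "\<rho> = 1 - y 0 / s"
    have y0: "0 \<le> y 0" and hz: "\<bar>x (p-1) - 1\<bar> \<le> \<rho>"
      and hW: "(\<Sum>i<p-1. \<bar>x i - x (p-1)/2\<bar>) \<le> \<rho> * ((real p - 1)/2) + (real p - 3) * (x (p-1) - 1)/2"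
      using inw unfolding inP_def \<rho>_def by auto
    have \<rho>0: "0 \<le> \<rho>" using hz by linarith
    have \<rho>1: "\<rho> \<le> 1" unfolding \<rho>_def using y0 s0 by simp
    have ys: "y 0 = (1 - \<rho>) * s" unfolding \<rho>_def using s0 by simp
    have goal: "lin p \<alpha> x + lin 1 \<beta> y \<le> \<gamma>"
    proof (cases "\<rho> = 0")
      case True
      then have z1: "x (p-1) = 1" using hz by simp
      have "(\<Sum>i<p-1. \<bar>x i - x (p-1)/2\<bar>) \<le> 0" using hW True z1 by simp
      then have "(\<Sum>i<p-1. \<bar>x i - x (p-1)/2\<bar>) = 0"
        by (meson antisym sum_nonneg abs_ge_zero)
      then have "\<forall>i\<in>{..<p-1}. \<bar>x i - x (p-1)/2\<bar> = 0"
        by (subst (asm) sum_nonneg_eq_0_iff) auto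
      then have xi: "\<And>i. i < p-1 \<Longrightarrow> x i = 1/2" using z1 by auto
      have "lin p \<alpha> x = lin p \<alpha> (xb p)"
      proof (rule lin_cong)
        fix j assume "j < p"
        then have "j < p - 1 \<or> j = p - 1" by auto
        then show "x j = xb p j" using xi z1 by (auto simp: xb_def)
      qed
      moreover have "lin 1 \<beta> y = \<beta> 0 * s" using ys True by (simp add: lin1 lin1')
      ultimately show ?thesis using A by simp
    next
      case False
      then have \<rho>p: "\<rho> > 0" using \<rho>0 by simp
      define x' where "x' = (\<lambda>j. xb p j + (x j - xb p j) / \<rho>)"
      have x'1: "x' (p-1) = 1 + (x (p-1) - 1) / \<rho>" by (simp add: x'_def xb_def)
      have x'i: "x' i - x' (p-1)/2 = (x i - x (p-1)/2) / \<rho>" if "i < p-1" for i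
        using that \<rho>p by (simp add: x'_def xb_def field_simps)
      have inX: "inP p 1 x' 0"
      proof -
        have a1: "\<bar>x' (p-1) - 1\<bar> \<le> 1"
          unfolding x'1 using hz \<rho>p by (simp add: abs_divide)
        have "(\<Sum>i<p-1. \<bar>x' i - x' (p-1)/2\<bar>) = (\<Sum>i<p-1. \<bar>x i - x (p-1)/2\<bar>) / \<rho>"
          unfolding sum_divide_distrib using x'i \<rho>p by (intro sum.cong) (auto simp: abs_divide)
        also have "\<dots> \<le> (\<rho> * ((real p - 1)/2) + (real p - 3) * (x (p-1) - 1)/2) / \<rho>"
          using hW \<rho>p by (intro divide_right_mono) auto
        also have "\<dots> = (1 - 0/1) * ((real p - 1)/2) + (real p - 3) * (x' (p-1) - 1)/2"
          unfolding x'1 using \<rho>p by (simp add: field_simps)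
        finally show ?thesis using a1 unfolding inP_def by simp
      qed
      have V3: "lin p \<alpha> x' \<le> \<gamma>" using FC[OF inX] .
      have xe: "x = (\<lambda>j. (1 - \<rho>) * xb p j + \<rho> * x' j)"
        using \<rho>p by (auto simp: x'_def field_simps)
      have "lin p \<alpha> x + lin 1 \<beta> y = (1 - \<rho>) * (lin p \<alpha> (xb p) + \<beta> 0 * s) + \<rho> * lin p \<alpha> x'"
        by (subst xe, subst lin_comb) (simp add: lin1 lin1' ys algebra_simps)
      also have "\<dots> \<le> (1 - \<rho>) * \<gamma> + \<rho> * \<gamma>"
        using A V3 \<rho>0 \<rho>1 by (intro add_mono mult_left_mono) auto
      finally show ?thesis by (simp add: algebra_simps)
    qed
    then show "lin p \<alpha> (fst w) + lin 1 \<beta> (snd w) \<le> \<gamma>" using wxy by simp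
  qed
qed

lemma abs_sum_iff:
  fixes n :: nat
  shows "(\<forall>S\<subseteq>{..<n}. (\<Sum>i<n. (if i \<in> S then 1 else -1) * w i) \<le> (R::real)) \<longleftrightarrow> (\<Sum>i<n. \<bar>w i\<bar>) \<le> R"
proof
  assume h: "\<forall>S\<subseteq>{..<n}. (\<Sum>i<n. (if i \<in> S then 1 else -1) * w i) \<le> R"
  define S where "S = {i. i < n \<and> w i \<ge> 0}"
  have "(\<Sum>i<n. \<bar>w i\<bar>) = (\<Sum>i<n. (if i \<in> S then 1 else -1) * w i)"
    by (intro sum.cong) (auto simp: S_def)
  also have "\<dots> \<le> R" using h[rule_format, of S] by (auto simp: S_def)
  finally show "(\<Sum>i<n. \<bar>w i\<bar>) \<le> R" .
next
  assume h: "(\<Sum>i<n. \<bar>w i\<bar>) \<le> R"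
  show "\<forall>S\<subseteq>{..<n}. (\<Sum>i<n. (if i \<in> S then 1 else -1) * w i) \<le> R"
  proof (intro allI impI)
    fix S :: "nat set"
    have "(\<Sum>i<n. (if i \<in> S then 1 else -1) * w i) \<le> (\<Sum>i<n. \<bar>w i\<bar>)"
      by (intro sum_mono) auto
    then show "(\<Sum>i<n. (if i \<in> S then 1 else -1) * w i) \<le> R" using h by linarith
  qed
qed

lemma int_pt:
  assumes p3: "p \<ge> 3" and h: "inP p 1 x y0" and xi: "\<forall>i<p. x i \<in> \<int>"
  shows "y0 \<le> 0"
proof (rule ccontr)
  assume "\<not> y0 \<le> 0"
  then have y: "y0 > 0" by simp
  have hz: "\<bar>x (p-1) - 1\<bar> \<le> 1 - y0" and
    hW: "(\<Sum>i<p-1. \<bar>x i - x (p-1)/2\<bar>) \<le> (1 - y0) * ((real p - 1)/2) + (real p - 3) * (x (p-1) - 1)/2"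
    using h by (auto simp: inP_def)
  have "p - 1 < p" using p3 by simp
  then have "x (p-1) \<in> \<int>" using xi by blast
  then obtain n where n: "x (p-1) = of_int n" by (rule Ints_cases)
  have "\<bar>real_of_int n - 1\<bar> < 1" using hz y n by simp
  then have "n = 1" by linarith
  then have z1: "x (p-1) = 1" using n by simp
  have "(\<Sum>i<p-1. (1/2::real)) \<le> (\<Sum>i<p-1. \<bar>x i - x (p-1)/2\<bar>)"
  proof (intro sum_mono)
    fix i assume "i \<in> {..<p-1}"
    then have "x i \<in> \<int>" using xi by auto
    then obtain k where k: "x i = of_int k" by (metis Ints_cases)
    have "\<bar>real_of_int k - 1/2\<bar> \<ge> 1/2"
    proof (cases "k \<le> 0")
      case True then have "real_of_int k \<le> 0" by simp
      then show ?thesis by simp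
    next
      case False then have "real_of_int k \<ge> 1" by simp
      then show ?thesis by simp
    qed
    then show "1/2 \<le> \<bar>x i - x (p-1)/2\<bar>" using k z1 by simp
  qed
  then have "(real p - 1)/2 \<le> (1 - y0) * ((real p - 1)/2)"
    using hW z1 p3 by (simp add: of_nat_diff)
  moreover have "(1 - y0) * ((real p - 1)/2) < (real p - 1)/2"
    using y p3 by (simp add: field_simps)
  ultimately show False by linarith
qed

definition sg :: "nat set \<Rightarrow> nat \<Rightarrow> real" where
  "sg S i = (if i \<in> S then 1 else -1)"

definition row :: "nat \<Rightarrow> nat set \<Rightarrow> (nat \<Rightarrow> real) \<times> (nat \<Rightarrow> real) \<times> real" where
  "row p S = ((\<lambda>j. if j < p-1 then sg S j else if j = p-1 then -(\<Sum>i<p-1. sg S i)/2 - (real p - 3)/2 else 0),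
              (\<lambda>_. (real p - 1)/2), 1)"

definition rows :: "nat \<Rightarrow> ((nat \<Rightarrow> real) \<times> (nat \<Rightarrow> real) \<times> real) list" where
  "rows p = [((\<lambda>_. 0), (\<lambda>_. -1), 0), ((\<lambda>j. if j = p-1 then 1 else 0), (\<lambda>_. 1), 2),
             ((\<lambda>j. if j = p-1 then -1 else 0), (\<lambda>_. 1), 0)] @ map (\<lambda>l. row p (set l)) (subseqs [0..<p-1])"

lemma set_rows: "set (rows p) = {((\<lambda>_. 0), (\<lambda>_. -1), 0), ((\<lambda>j. if j = p-1 then 1 else 0), (\<lambda>_. 1), 2),
             ((\<lambda>j. if j = p-1 then -1 else 0), (\<lambda>_. 1), 0)} \<union> row p ` Pow {..<p-1}"
proof -
  have "set (map (\<lambda>l. row p (set l)) (subseqs [0..<p-1])) = row p ` (set ` set (subseqs [0..<p-1]))"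
    by (simp add: image_image)
  also have "\<dots> = row p ` Pow {..<p-1}" by (simp add: subseqs_powset atLeast0LessThan)
  finally show ?thesis unfolding rows_def by simp
qed

lemma lin_row:
  assumes p3: "p \<ge> 3"
  shows "lin p (fst (row p S)) x + lin 1 (fst (snd (row p S))) y \<le> snd (snd (row p S)) \<longleftrightarrow>
    (\<Sum>i<p-1. sg S i * (x i - x (p-1)/2)) \<le> (1 - y 0) * ((real p - 1)/2) + (real p - 3) * (x (p-1) - 1)/2"
proof -
  have l1: "lin p (fst (row p S)) x = (\<Sum>i<p-1. sg S i * x i) + (-(\<Sum>i<p-1. sg S i)/2 - (real p - 3)/2) * x (p-1)"
    using p3 by (subst lin_split) (auto simp: row_def intro!: sum.cong)
  have l2: "lin 1 (fst (snd (row p S))) y = (real p - 1)/2 * y 0"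
    by (simp add: row_def lin_def)
  have e: "(\<Sum>i<p-1. sg S i * (x i - x (p-1)/2)) = (\<Sum>i<p-1. sg S i * x i) - (\<Sum>i<p-1. sg S i) * (x (p-1)/2)"
    by (simp add: right_diff_distrib sum_subtractf sum_distrib_right)
  have "snd (snd (row p S)) = 1" by (simp add: row_def)
  moreover have "(\<Sum>i<p-1. sg S i * x i) + (-(\<Sum>i<p-1. sg S i)/2 - (real p - 3)/2) * x (p-1) + (real p - 1)/2 * y 0 - 1
     = ((\<Sum>i<p-1. sg S i * x i) - (\<Sum>i<p-1. sg S i) * (x (p-1)/2)) - ((1 - y 0) * ((real p - 1)/2) + (real p - 3) * (x (p-1) - 1)/2)"
    by (simp add: field_simps)
  ultimately show ?thesis unfolding l1 l2 e by linarith
qed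

lemma Pt_rows:
  assumes p3: "p \<ge> 3" and sp: "(x, y) \<in> space p 1"
  shows "inP p 1 x (y 0) \<longleftrightarrow> (\<forall>(ax, ay, b) \<in> set (rows p). lin p ax x + lin 1 ay y \<le> b)"
proof -
  have r1: "lin p (\<lambda>_. 0) x + lin 1 (\<lambda>_. -1) y = - y 0" by (simp add: lin_def)
  have r2: "lin p (\<lambda>j. if j = p-1 then 1 else 0) x + lin 1 (\<lambda>_. 1) y = x (p-1) + y 0"
  proof -
    have "lin p (\<lambda>j. if j = p-1 then 1 else 0) x = (\<Sum>j<p. if j = p-1 then x (p-1) else 0)"
      unfolding lin_def by (intro sum.cong) auto
    also have "\<dots> = x (p-1)" using p3 by simp
    finally show ?thesis by (simp add: lin_def)
  qed
  have r3: "lin p (\<lambda>j. if j = p-1 then -1 else 0) x + lin 1 (\<lambda>_. 1) y = - x (p-1) + y 0"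
  proof -
    have "lin p (\<lambda>j. if j = p-1 then -1 else 0) x = (\<Sum>j<p. if j = p-1 then - x (p-1) else 0)"
      unfolding lin_def by (intro sum.cong) auto
    also have "\<dots> = - x (p-1)" using p3 by simp
    finally show ?thesis by (simp add: lin_def)
  qed
  have rr: "(\<forall>S\<in>Pow {..<p-1}. lin p (fst (row p S)) x + lin 1 (fst (snd (row p S))) y \<le> snd (snd (row p S)))
     \<longleftrightarrow> (\<Sum>i<p-1. \<bar>x i - x (p-1)/2\<bar>) \<le> (1 - y 0) * ((real p - 1)/2) + (real p - 3) * (x (p-1) - 1)/2"
    unfolding lin_row[OF p3] sg_def abs_sum_iff[symmetric] by auto
  have "(\<forall>(ax, ay, b) \<in> set (rows p). lin p ax x + lin 1 ay y \<le> b) \<longleftrightarrow>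
     (- y 0 \<le> 0 \<and> x (p-1) + y 0 \<le> 2 \<and> - x (p-1) + y 0 \<le> 0) \<and>
     (\<forall>S\<in>Pow {..<p-1}. lin p (fst (row p S)) x + lin 1 (fst (snd (row p S))) y \<le> snd (snd (row p S)))"
    unfolding set_rows using r1 r2 r3 by (auto simp: split_beta)
  also have "\<dots> \<longleftrightarrow> inP p 1 x (y 0)" unfolding rr inP_def by auto
  finally show ?thesis by simp
qed

lemma rat_poly:
  assumes p3: "p \<ge> 3"
  shows "rational_polytope p 1 (Pt p 1)"
  unfolding rational_polytope_def
proof (intro conjI exI[of _ "rows p"])
  show "\<forall>(ax, ay, b)\<in>set (rows p). (\<forall>i<p. ax i \<in> \<rat>) \<and> (\<forall>j<1. ay j \<in> \<rat>) \<and> b \<in> \<rat>"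
  proof -
    have "\<forall>i<p. fst (row p S) i \<in> \<rat>" for S
    proof -
      have "(\<Sum>i<p-1. sg S i) \<in> \<rat>" by (intro Rats_sum) (simp add: sg_def)
      moreover have "real p \<in> \<rat>" by simp
      ultimately have "-(\<Sum>i<p-1. sg S i)/2 - (real p - 3)/2 \<in> \<rat>"
        by simp
      then show ?thesis by (auto simp: row_def sg_def)
    qed
    moreover have "\<forall>j<1. fst (snd (row p S)) j \<in> \<rat>" for S by (simp add: row_def)
    moreover have "snd (snd (row p S)) \<in> \<rat>" for S by (simp add: row_def)
    ultimately show ?thesis unfolding set_rows by (auto simp: split_beta)
  qed
  show "Pt p 1 = {(x, y) \<in> space p 1. \<forall>(ax, ay, b)\<in>set (rows p). lin p ax x + lin 1 ay y \<le> b}"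
    unfolding Pt_def using Pt_rows[OF p3] by auto
  show "\<exists>M. \<forall>(x, y)\<in>Pt p 1. (\<forall>i<p. \<bar>x i\<bar> \<le> M) \<and> (\<forall>j<1. \<bar>y j\<bar> \<le> M)"
  proof (intro exI[of _ "real p"] ballI)
    fix w assume "w \<in> Pt p 1"
    obtain x y where w: "w = (x, y)" by (cases w)
    have h: "inP p 1 x (y 0)" using \<open>w \<in> Pt p 1\<close> w by (simp add: Pt_def)
    have y0: "0 \<le> y 0" and hz: "\<bar>x (p-1) - 1\<bar> \<le> 1 - y 0" and
      hW: "(\<Sum>i<p-1. \<bar>x i - x (p-1)/2\<bar>) \<le> (1 - y 0) * ((real p - 1)/2) + (real p - 3) * (x (p-1) - 1)/2"
      using h by (auto simp: inP_def)
    have b1: "(1 - y 0) * ((real p - 1)/2) \<le> (real p - 1)/2"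
      using y0 p3 by (simp add: mult_left_le_one_le)
    have b2: "(real p - 3) * (x (p-1) - 1)/2 \<le> (real p - 3) / 2"
      using hz y0 p3 by (intro divide_right_mono mult_left_le) auto
    have xi: "\<bar>x i\<bar> \<le> real p" if "i < p" for i
    proof (cases "i < p - 1")
      case True
      have "\<bar>x i - x (p-1)/2\<bar> \<le> (\<Sum>i<p-1. \<bar>x i - x (p-1)/2\<bar>)"
        using True by (intro member_le_sum) auto
      also have "\<dots> \<le> (1 - y 0) * ((real p - 1)/2) + (real p - 3) * (x (p-1) - 1)/2" by (rule hW)
      also have "\<dots> \<le> (real p - 1)/2 + (real p - 3) / 2" by (rule add_mono[OF b1 b2])
      also have "\<dots> = real p - 2" by (simp add: field_simps)
      finally have "\<bar>x i - x (p-1)/2\<bar> \<le> real p - 2" .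
      then show ?thesis using hz y0 by linarith
    next
      case False
      then have "i = p - 1" using that by auto
      have rp: "real p \<ge> 3" using p3 by simp
      show ?thesis unfolding \<open>i = p - 1\<close> using hz y0 rp unfolding abs_le_iff by linarith
    qed
    have "\<bar>y 0\<bar> \<le> real p" using hz y0 p3 unfolding abs_le_iff by linarith
    then show "case w of (x, y) \<Rightarrow> (\<forall>i<p. \<bar>x i\<bar> \<le> real p) \<and> (\<forall>j<1. \<bar>y j\<bar> \<le> real p)"
      using xi w by auto
  qed
qed

lemma conv_mem: "z \<in> S \<Longrightarrow> z \<in> conv S"
  unfolding conv_def
  by (intro CollectI exI[of _ 1] exI[of _ "\<lambda>_. 1"] exI[of _ "\<lambda>_. z"]) auto

lemma iter_0: "k_disj_iter p q k 0 P = P"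
  by (simp add: k_disj_iter_def)

lemma iter_Suc: "k_disj_iter p q k (Suc n) P = k_disj_closure p q k (k_disj_iter p q k n P)"
  by (simp add: k_disj_iter_def)

lemma iter_sub: "k_disj_iter p q k n P \<subseteq> P"
proof (induction n)
  case 0 then show ?case by (simp add: iter_0)
next
  case (Suc n) then show ?case using closure_sub by (metis iter_Suc order_trans)
qed

lemma inv:
  assumes p3: "p \<ge> 3"
  shows "Pt p ((1 / (2 * (real p - 1))) ^ n) \<subseteq> k_disj_iter p 1 (2^(p-1)+1) n (Pt p 1)"
proof (induction n)
  case 0 then show ?case by (simp add: iter_0)
next
  case (Suc n)
  have p1: "real p - 1 > 0" using p3 by simp
  have tpos: "(1 / (2 * (real p - 1))) ^ n > 0" using p1 by simp
  have e: "(1 / (2 * (real p - 1))) ^ Suc n = (1 / (2 * (real p - 1))) ^ n / (2 * (real p - 1))"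
    by (simp add: field_simps)
  show ?case unfolding e iter_Suc by (rule step[OF p3 tpos Suc.IH])
qed

theorem theorem2p11:
  fixes p :: nat
  assumes "p \<ge> 3"
  shows "\<exists>(q::nat) (P::pt set) (c::nat \<Rightarrow> real) (h::nat \<Rightarrow> real).
           q \<ge> 1 \<and> rational_polytope p q P \<and> int_hull p P \<noteq> {} \<and>
           (\<forall>i<p. c i \<in> \<rat>) \<and> (\<forall>j<q. h j \<in> \<rat>) \<and>
           (let \<gamma>star = Sup ((\<lambda>(x, y). lin p c x + lin q h y) ` int_hull p P) in
            (\<forall>n::nat. Sup ((\<lambda>(x, y). lin p c x + lin q h y) `
                       k_disj_iter p q (2 ^ (p - 1) + 1) n P) > \<gamma>star))"
proof -
  have p3: "p \<ge> 3" using assms .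
  define P where "P = Pt p 1"
  define \<kappa> where "\<kappa> = 1 / (2 * (real p - 1))"
  have p1: "real p - 1 > 0" using p3 by simp
  have fe: "(\<lambda>(x, y). lin p (\<lambda>_. 0) x + lin 1 (\<lambda>_. 1) y) = (\<lambda>z. snd z 0)"
    by (auto simp: lin_def)
  have int_le: "snd z 0 \<le> 0" if "z \<in> int_hull p P" for z
  proof -
    define S where "S = {(x, y) \<in> P. \<forall>i<p. x i \<in> \<int>}"
    have "z \<in> conv S" using that unfolding S_def int_hull_def .
    then have "\<exists>(m::nat) (w::nat \<Rightarrow> real) (v::nat \<Rightarrow> pt).
      (\<forall>i<m. w i \<ge> 0 \<and> v i \<in> S) \<and> (\<Sum>i<m. w i) = 1 \<and>
      z = ((\<lambda>j. \<Sum>i<m. w i * fst (v i) j), (\<lambda>j. \<Sum>i<m. w i * snd (v i) j))"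
      by (simp only: conv_def mem_Collect_eq)
    then obtain m :: nat and w :: "nat \<Rightarrow> real" and v :: "nat \<Rightarrow> pt" where mwv: "\<forall>i<m. w i \<ge> 0 \<and> v i \<in> S"
      "z = ((\<lambda>j. \<Sum>i<m. w i * fst (v i) j), (\<lambda>j. \<Sum>i<m. w i * snd (v i) j))"
      by blast
    have "snd z 0 = (\<Sum>i<m. w i * snd (v i) 0)" using mwv(2) by simp
    also have "\<dots> \<le> 0"
    proof (intro sum_nonpos)
      fix i assume "i \<in> {..<m}"
      then have wi: "w i \<ge> 0" and vi: "v i \<in> {(x, y) \<in> P. \<forall>i<p. x i \<in> \<int>}" using mwv(1) unfolding S_def by auto
      obtain x y where v: "v i = (x, y)" by (cases "v i")
      have "inP p 1 x (y 0)" "\<forall>i<p. x i \<in> \<int>" using vi v by (auto simp: P_def Pt_def)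
      then have "y 0 \<le> 0" using int_pt[OF p3] by blast
      then show "w i * snd (v i) 0 \<le> 0" using wi v by (simp add: mult_nonneg_nonpos)
    qed
    finally show ?thesis .
  qed
  have zP: "((\<lambda>_. 0), (\<lambda>_. 0)) \<in> P"
  proof -
    have e: "(1 - 0/1) * ((real p - 1)/2) + (real p - 3) * (0 - 1)/2 = (1::real)" by (simp add: field_simps)
    have "inP p 1 (\<lambda>_. 0) 0" unfolding inP_def by (simp add: field_simps)
    then show ?thesis by (simp add: P_def Pt_def space_def)
  qed
  have ne: "int_hull p P \<noteq> {}"
  proof -
    have "((\<lambda>_. 0), (\<lambda>_. 0)) \<in> int_hull p P"
      unfolding int_hull_def using zP by (intro conv_mem) auto
    then show ?thesis by blast
  qed
  have gs: "Sup ((\<lambda>z. snd z 0) ` int_hull p P) \<le> 0"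
    using ne int_le by (intro cSup_least) auto
  have main: "Sup ((\<lambda>z. snd z 0) ` k_disj_iter p 1 (2 ^ (p - 1) + 1) n P) > 0" for n
  proof -
    have kp: "\<kappa> ^ n > 0" using p1 by (simp add: \<kappa>_def)
    have "(xb p, yv (\<kappa> ^ n)) \<in> Pt p (\<kappa> ^ n)"
    proof -
      have s: "(\<Sum>i<p-1. \<bar>xb p i - xb p (p-1)/2\<bar>) = 0" by (intro sum.neutral) (auto simp: xb_def)
      have "inP p (\<kappa> ^ n) (xb p) (\<kappa> ^ n)" unfolding inP_def s using kp p3 by (simp add: xb_def)
      moreover have "(xb p, yv (\<kappa> ^ n)) \<in> space p 1" using p3 by (auto simp: space_yv xb_def)
      ultimately show ?thesis by (simp add: Pt_def yv_def)
    qed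
    then have mem: "(xb p, yv (\<kappa> ^ n)) \<in> k_disj_iter p 1 (2 ^ (p - 1) + 1) n P"
      using inv[OF p3, of n] unfolding P_def \<kappa>_def by blast
    have bdd: "bdd_above ((\<lambda>z. snd z 0) ` k_disj_iter p 1 (2 ^ (p - 1) + 1) n P)"
    proof (rule bdd_aboveI2)
      fix z assume "z \<in> k_disj_iter p 1 (2 ^ (p - 1) + 1) n P"
      then have "z \<in> P" using iter_sub by blast
      then have "\<bar>fst z (p-1) - 1\<bar> \<le> 1 - snd z 0" by (simp add: P_def Pt_def inP_def)
      then show "snd z 0 \<le> 1" by linarith
    qed
    have "\<kappa> ^ n \<le> Sup ((\<lambda>z. snd z 0) ` k_disj_iter p 1 (2 ^ (p - 1) + 1) n P)"
      using cSup_upper[OF imageI[OF mem] bdd] by (simp add: yv_def)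
    then show ?thesis using kp by linarith
  qed
  show ?thesis
    apply (rule exI[of _ "1::nat"], rule exI[of _ P], rule exI[of _ "\<lambda>_::nat. 0::real"], rule exI[of _ "\<lambda>_::nat. 1::real"])
    unfolding fe Let_def using rat_poly[OF p3] ne gs main
    by (auto simp: P_def intro: le_less_trans)
qed

end
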